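(* Let $f\in\mathbb{Z}_2[x]$, $n\ge1$, and let $\sigma$ be a growing $k$-cycle of $f_n$. Then its (unique) lift either strongly grows or strongly splits.
   Context: $f_n$ is the induced map on $\mathbb{Z}/2^n\mathbb{Z}$, $f_n(x\bmod 2^n)=f(x)\bmod 2^n$. A $k$-cycle of $f_n$ is a tuple $\sigma=(x_1,\dots,x_k)$ of distinct elements with $f_n(x_i)=x_{i+1}$, $f_n(x_k)=x_1$; $\sigma$ grows if $\{y\in\mathbb{Z}/2^{n+1}\mathbb{Z}:y\bmod 2^n\in\sigma\}$ is a single cycle of $f_{n+1}$ (of length $2k$), called its lift. For a cycle of length $\ell$ at level $m$ and a representative $x\in\mathbb{Z}_2$ of one of its points, $a_m=(f^\ell)'(x)$ and $b_m=(f^\ell(x)-x)/2^m$; the cycle strongly grows if $a_m\equiv1\pmod4$ and $b_m$ is odd, and strongly splits if $a_m\equiv1\pmod4$ and $b_m$ is even. *)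

theory Defs
  imports "HOL-Computational_Algebra.Polynomial"
begin

text \<open>A 2-adic integer is represented by its compatible sequence of residues
  modulo 2^n (the inverse limit of the rings Z/2^nZ).\<close>

typedef padic2 = "{s :: nat \<Rightarrow> int. \<forall>n. s n \<in> {0..<2^n} \<and> (\<forall>m\<ge>n. s m mod 2^n = s n)}"
  morphisms digits Abs_padic2
  by (rule exI[of _ "\<lambda>_. 0"]) auto

setup_lifting type_definition_padic2

lemma padic2_compat_op:
  fixes a b :: "nat \<Rightarrow> int"
  assumes "\<forall>m\<ge>n. a m mod 2^n = a n" "\<forall>m\<ge>n. b m mod 2^n = b n" "m \<ge> n"
    and op: "op = (+) \<or> op = (*) \<or> op = (-)"
  shows "(op (a m) (b m) mod 2^m) mod 2^n = op (a n) (b n) mod 2^n"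
proof -
  have d: "(2::int)^n dvd 2^m" using \<open>m \<ge> n\<close> by (simp add: le_imp_power_dvd)
  have "(op (a m) (b m) mod 2^m) mod 2^n = op (a m) (b m) mod 2^n"
    using d by (simp add: mod_mod_cancel)
  also have "\<dots> = op (a m mod 2^n) (b m mod 2^n) mod 2^n"
    using op by (auto simp: mod_add_eq mod_mult_eq mod_diff_eq)
  also have "\<dots> = op (a n) (b n) mod 2^n" using assms by simp
  finally show ?thesis .
qed

lemma padic2_compat_uminus:
  fixes a :: "nat \<Rightarrow> int"
  assumes "\<forall>m\<ge>n. a m mod 2^n = a n" "m \<ge> n"
  shows "((- a m) mod 2^m) mod 2^n = (- a n) mod 2^n"
  using padic2_compat_op[of n "\<lambda>_. 0" a m "(-)"] assms by simp

instantiation padic2 :: comm_ring_1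
begin

lift_definition zero_padic2 :: padic2 is "\<lambda>_. 0" by auto
lift_definition one_padic2 :: padic2 is "\<lambda>n. 1 mod 2^n"
  by (auto simp: mod_mod_cancel le_imp_power_dvd)
lift_definition plus_padic2 :: "padic2 \<Rightarrow> padic2 \<Rightarrow> padic2"
  is "\<lambda>a b n. (a n + b n) mod 2^n"
  using padic2_compat_op by auto
lift_definition times_padic2 :: "padic2 \<Rightarrow> padic2 \<Rightarrow> padic2"
  is "\<lambda>a b n. (a n * b n) mod 2^n"
  using padic2_compat_op by auto
lift_definition minus_padic2 :: "padic2 \<Rightarrow> padic2 \<Rightarrow> padic2"
  is "\<lambda>a b n. (a n - b n) mod 2^n"
  using padic2_compat_op by auto
lift_definition uminus_padic2 :: "padic2 \<Rightarrow> padic2"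
  is "\<lambda>a n. (- a n) mod 2^n"
  using padic2_compat_uminus by auto

instance
proof
  fix a b c :: padic2
  show "a * b * c = a * (b * c)"
    by transfer (auto simp: mod_mult_left_eq mod_mult_right_eq mult.assoc)
  show "a * b = b * a" by transfer (simp add: mult.commute)
  show "1 * a = a"
  proof transfer
    fix a :: "nat \<Rightarrow> int"
    assume A: "\<forall>n. a n \<in> {0..<2^n} \<and> (\<forall>m\<ge>n. a m mod 2^n = a n)"
    show "(\<lambda>n. 1 mod 2^n * a n mod 2^n) = a"
    proof
      fix n show "1 mod 2^n * a n mod 2^n = a n"
      proof (cases n)
        case (Suc k)
        have "(1::int) < 2 * 2^k"
          using one_le_power[of "2::int" k] by linarith
        then show ?thesis using A[rule_format, of n] Suc by (simp add: mod_pos_pos_trivial)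
      next
        case 0
        then show ?thesis using A[rule_format, of 0] by simp
      qed
    qed
  qed
  show "a + b + c = a + (b + c)"
    by transfer (auto simp: mod_add_left_eq mod_add_right_eq add.assoc)
  show "a + b = b + a" by transfer (simp add: add.commute)
  show "0 + a = a" by transfer auto
  show "- a + a = 0" by transfer (auto simp: mod_add_left_eq)
  show "a - b = a + - b" by transfer (auto simp: mod_add_right_eq)
  show "(a + b) * c = a * c + b * c"
    by transfer (auto simp: mod_mult_left_eq mod_add_eq distrib_right)
  show "(0::padic2) \<noteq> 1"
  proof
    assume "(0::padic2) = 1"
    then have "digits 0 1 = digits 1 1" by simp
    then show False by transfer simp
  qed
qed

end

text \<open>Elements of Z/2^nZ are represented by their least nonnegative residues,
  i.e. by the integers in {0..<2^n}.\<close>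

definition red :: "nat \<Rightarrow> padic2 \<Rightarrow> int" where
  "red n x = digits x n"

definition fmod :: "padic2 poly \<Rightarrow> nat \<Rightarrow> int \<Rightarrow> int" where
  "fmod f n r = red n (poly f (of_int r))"

definition is_cycle :: "padic2 poly \<Rightarrow> nat \<Rightarrow> nat \<Rightarrow> int list \<Rightarrow> bool" where
  "is_cycle f n k xs \<longleftrightarrow> length xs = k \<and> k \<ge> 1 \<and> distinct xs \<and>
     set xs \<subseteq> {0..<2^n} \<and>
     (\<forall>i<k. fmod f n (xs ! i) = xs ! ((i + 1) mod k))"

definition lift_set :: "nat \<Rightarrow> int list \<Rightarrow> int set" where
  "lift_set n xs = {y \<in> {0..<2^(n+1)}. y mod 2^n \<in> set xs}"

definition is_lift :: "padic2 poly \<Rightarrow> nat \<Rightarrow> int list \<Rightarrow> int list \<Rightarrow> bool" where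
  "is_lift f n xs ys \<longleftrightarrow> is_cycle f (n+1) (2 * length xs) ys \<and> set ys = lift_set n xs"

definition grows :: "padic2 poly \<Rightarrow> nat \<Rightarrow> int list \<Rightarrow> bool" where
  "grows f n xs \<longleftrightarrow> (\<exists>ys. is_lift f n xs ys)"

definition poly_iter :: "'a::comm_semiring_1 poly \<Rightarrow> nat \<Rightarrow> 'a poly" where
  "poly_iter f l = ((\<lambda>q. pcompose f q) ^^ l) [:0, 1:]"

text \<open>Formal derivative of a polynomial over a commutative ring
  (the library's pderiv requires a ring without zero divisors).\<close>
definition fderiv :: "'a::comm_semiring_1 poly \<Rightarrow> 'a poly" where
  "fderiv p = (\<Sum>i<degree p. monom (of_nat (Suc i) * coeff p (Suc i)) i)"

definition a_coef :: "padic2 poly \<Rightarrow> nat \<Rightarrow> padic2 \<Rightarrow> padic2" where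
  "a_coef f l x = poly (fderiv (poly_iter f l)) x"

definition b_coef :: "padic2 poly \<Rightarrow> nat \<Rightarrow> nat \<Rightarrow> padic2 \<Rightarrow> padic2" where
  "b_coef f m l x = (THE b. 2^m * b = poly (poly_iter f l) x - x)"

text \<open>A cycle ys of length l at level m strongly grows / strongly splits.
  The quantities are evaluated at every representative x in Z_2 of every point
  of the cycle (they do not depend on this choice).\<close>
definition strongly_grows :: "padic2 poly \<Rightarrow> nat \<Rightarrow> int list \<Rightarrow> bool" where
  "strongly_grows f m ys \<longleftrightarrow> (\<forall>x. red m x \<in> set ys \<longrightarrow>
      red 2 (a_coef f (length ys) x) = 1 \<and> red 1 (b_coef f m (length ys) x) = 1)"

definition strongly_splits :: "padic2 poly \<Rightarrow> nat \<Rightarrow> int list \<Rightarrow> bool" where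
  "strongly_splits f m ys \<longleftrightarrow> (\<forall>x. red m x \<in> set ys \<longrightarrow>
      red 2 (a_coef f (length ys) x) = 1 \<and> red 1 (b_coef f m (length ys) x) = 0)"

end

theory Submission
  imports Defs
begin

section \<open>Basic facts on padic2\<close>

lemma red_range: "red n x \<in> {0..<2^n}"
  using digits[of x] by (simp add: red_def)

lemma red_ge0: "0 \<le> red n x" and red_lt: "red n x < 2^n"
  using red_range[of n x] by auto

lemma red_compat: "j \<le> m \<Longrightarrow> red m x mod 2^j = red j x"
  using digits[of x] by (simp add: red_def)

lemma red_add: "red n (x + y) = (red n x + red n y) mod 2^n"
  by (simp add: red_def plus_padic2.rep_eq)

lemma red_mult: "red n (x * y) = (red n x * red n y) mod 2^n"
  by (simp add: red_def times_padic2.rep_eq)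

lemma red_diff: "red n (x - y) = (red n x - red n y) mod 2^n"
  by (simp add: red_def minus_padic2.rep_eq)

lemma red_one: "red n 1 = 1 mod 2^n"
  by (simp add: red_def one_padic2.rep_eq)

lemma red_zero: "red n 0 = 0"
  by (simp add: red_def zero_padic2.rep_eq)

lemma red_mod: "red n x mod 2^n = red n x"
  using red_range[of n x] by simp

lemma red_eqI: "(\<And>n. red n x = red n y) \<Longrightarrow> x = y"
  by (metis digits_inject ext red_def)

lemma red_of_nat: "red n (of_nat j) = int j mod 2^n"
proof (induction j)
  case 0 then show ?case by (simp add: red_zero)
next
  case (Suc j)
  have "red n (of_nat (Suc j)) = red n (1 + of_nat j)" by simp
  also have "\<dots> = (red n 1 + red n (of_nat j)) mod 2^n" by (rule red_add)
  also have "\<dots> = (1 mod 2^n + int j mod 2^n) mod 2^n" by (simp only: red_one Suc.IH)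
  also have "\<dots> = (1 + int j) mod 2^n" by (rule mod_add_eq)
  finally show ?case by simp
qed

lemma red_of_int: "red n (of_int r) = r mod 2^n"
proof (cases r rule: int_cases)
  case (nonneg j)
  then show ?thesis by (simp add: red_of_nat)
next
  case (neg j)
  have "of_int r = (0::padic2) - of_nat (Suc j)" using neg by simp
  then have "red n (of_int r) = (red n 0 - red n (of_nat (Suc j))) mod 2^n"
    by (simp only: red_diff)
  also have "\<dots> = (0 - int (Suc j) mod 2^n) mod 2^n" by (simp only: red_zero red_of_nat)
  also have "\<dots> = (0 - int (Suc j)) mod 2^n" by (rule mod_diff_right_eq)
  finally show ?thesis using neg by simp
qed

lemma red_pow2: "red n ((2::padic2)^m) = 2^m mod 2^n"
  using red_of_int[of n "2^m"] by simp

lemma red_eq_iff: "red n x = red n y \<longleftrightarrow> red n (x - y) = 0"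
proof -
  have "red n (x - y) = 0 \<longleftrightarrow> (red n x - red n y) mod 2^n = 0" by (simp add: red_diff)
  also have "\<dots> \<longleftrightarrow> red n x mod 2^n = red n y mod 2^n"
    by (simp add: mod_eq_dvd_iff dvd_eq_mod_eq_0)
  also have "\<dots> \<longleftrightarrow> red n x = red n y" by (simp add: red_mod)
  finally show ?thesis by simp
qed

lemma red_mult_pow2: "red (j + m) ((2::padic2)^m * b) = 2^m * red j b"
proof -
  have "red (j + m) (2^m * b) = (2^m mod 2^(j+m) * red (j+m) b) mod 2^(j+m)"
    by (simp add: red_mult red_pow2)
  also have "\<dots> = (2^m * red (j+m) b) mod (2^m * 2^j)"
    by (simp add: mod_mult_left_eq power_add mult.commute)
  also have "\<dots> = 2^m * (red (j+m) b mod 2^j)" by (rule mod_mult_mult1)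
  also have "\<dots> = 2^m * red j b" by (simp add: red_compat)
  finally show ?thesis .
qed

lemma pow2_cancel:
  assumes "(2::padic2)^m * b = 2^m * b'" shows "b = b'"
proof (rule red_eqI)
  fix j
  have "2^m * red j b = (2::int)^m * red j b'"
    using red_mult_pow2[of j m b] red_mult_pow2[of j m b'] assms by simp
  then show "red j b = red j b'" by simp
qed

lemma pow2_dvd_iff: "(2::padic2)^m dvd x \<longleftrightarrow> red m x = 0"
proof
  assume "2^m dvd x"
  then obtain q where "x = 2^m * q" by (auto elim: dvdE)
  then show "red m x = 0" by (simp add: red_mult red_pow2)
next
  assume x0: "red m x = 0"
  define q where "q = (\<lambda>n. red (n + m) x div 2^m)"
  have qin: "q \<in> {s :: nat \<Rightarrow> int. \<forall>n. s n \<in> {0..<2^n} \<and> (\<forall>m\<ge>n. s m mod 2^n = s n)}"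
  proof (clarify, intro conjI allI impI)
    fix n
    have "red (n+m) x < 2^m * 2^n" using red_lt[of "n+m" x] by (simp add: power_add mult.commute)
    moreover have "0 \<le> red (n+m) x" by (rule red_ge0)
    ultimately show "q n \<in> {0..<2^n}" unfolding q_def
      by (auto simp: pos_imp_zdiv_nonneg_iff) (smt (verit, ccfv_threshold) not_exp_less_eq_0_int zdiv_eq_0_iff zdiv_zmult2_eq)
  next
    fix n m' :: nat assume "n \<le> m'"
    have "q m' mod 2^n = (red (m'+m) x div 2^m) mod 2^n" by (simp add: q_def)
    also have "\<dots> = (red (m'+m) x mod (2^m * 2^n)) div 2^m"
    proof -
      have e: "red (m'+m) x mod (2^m * 2^n) = 2^m * (red (m'+m) x div 2^m mod 2^n) + red (m'+m) x mod 2^m"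
        by (rule zmod_zmult2_eq) simp
      have "(2^m * (red (m'+m) x div 2^m mod 2^n) + red (m'+m) x mod (2::int)^m) div 2^m
            = red (m'+m) x div 2^m mod 2^n"
        by (simp add: div_add1_eq)
      then show ?thesis using e by simp
    qed
    also have "\<dots> = red (n+m) x div 2^m"
      using red_compat[of "n+m" "m'+m" x] \<open>n \<le> m'\<close> by (simp add: power_add mult.commute)
    finally show "q m' mod 2^n = q n" by (simp add: q_def)
  qed
  define qq where "qq = Abs_padic2 q"
  have rq: "red n qq = q n" for n using Abs_padic2_inverse[OF qin] by (simp add: red_def qq_def)
  have "x = 2^m * qq"
  proof (rule red_eqI)
    fix n
    have "red n (2^m * qq) = (2^m mod 2^n * q n) mod 2^n" by (simp add: red_mult red_pow2 rq)
    also have "\<dots> = (2^m * q n) mod 2^n" by (simp add: mod_mult_left_eq)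
    also have "2^m * q n = red (n+m) x"
    proof -
      have "red (n+m) x mod 2^m = 0" using red_compat[of m "n+m" x] x0 by simp
      then show ?thesis unfolding q_def
        by (metis add.right_neutral mult.commute div_mult_mod_eq)
    qed
    also have "red (n+m) x mod 2^n = red n x" by (simp add: red_compat)
    finally show "red n x = red n (2^m * qq)" by simp
  qed
  then show "2^m dvd x" by simp
qed

section \<open>Formal derivative\<close>

lemma coeff_fderiv: "coeff (fderiv p) n = of_nat (Suc n) * coeff p (Suc n)"
proof -
  have "coeff (fderiv p) n = (\<Sum>i<degree p. if i = n then of_nat (Suc i) * coeff p (Suc i) else 0)"
    by (simp add: fderiv_def coeff_sum coeff_monom)
  also have "\<dots> = (if n < degree p then of_nat (Suc n) * coeff p (Suc n) else 0)"
    by (simp add: sum.delta)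
  also have "\<dots> = of_nat (Suc n) * coeff p (Suc n)"
    by (auto simp: coeff_eq_0)
  finally show ?thesis .
qed

lemma fderiv_0 [simp]: "fderiv 0 = 0"
  by (rule poly_eqI) (simp add: coeff_fderiv)

lemma fderiv_pCons: "fderiv (pCons a p) = p + pCons 0 (fderiv p)"
  by (rule poly_eqI) (auto simp: coeff_fderiv coeff_pCons algebra_simps split: nat.split)

lemma fderiv_add: "fderiv (p + q) = fderiv p + fderiv q"
  by (rule poly_eqI) (simp add: coeff_fderiv algebra_simps)

lemma fderiv_smult: "fderiv (smult a p) = smult a (fderiv p)"
  by (rule poly_eqI) (simp add: coeff_fderiv algebra_simps)

lemma fderiv_mult: "fderiv (p * q) = p * fderiv q + q * fderiv p"
  by (induct p) (auto simp: fderiv_add fderiv_smult fderiv_pCons algebra_simps)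

lemma fderiv_pcompose: "fderiv (pcompose p q) = pcompose (fderiv p) q * fderiv q"
  by (induction p rule: pCons_induct)
     (auto simp: pcompose_pCons fderiv_add fderiv_mult fderiv_pCons pcompose_add algebra_simps)

lemma fderiv_X: "fderiv [:0, 1:] = (1 :: 'a::comm_semiring_1 poly)"
  by (rule poly_eqI) (auto simp: coeff_fderiv coeff_pCons split: nat.split)

lemma taylor1:
  fixes p :: "'a::comm_ring_1 poly"
  shows "\<exists>s. poly p (y + h) = poly p y + h * poly (fderiv p) y + h^2 * s"
proof (induction p rule: pCons_induct)
  case 0 then show ?case by (intro exI[of _ 0]) simp
next
  case (pCons a p)
  then obtain s where s: "poly p (y + h) = poly p y + h * poly (fderiv p) y + h^2 * s" by blast
  show ?case
    by (rule exI[of _ "poly (fderiv p) y + (y + h) * s"])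
       (simp only: poly_pCons fderiv_pCons poly_add s, simp add: algebra_simps power2_eq_square)
qed

lemma taylor2:
  fixes p :: "'a::comm_ring_1 poly"
  shows "\<exists>s t. poly (fderiv p) (y + h) = poly (fderiv p) y + 2 * h * s + h^2 * t"
proof (induction p rule: pCons_induct)
  case 0 then show ?case by (intro exI[of _ 0]) simp
next
  case (pCons a p)
  then obtain s t where st: "poly (fderiv p) (y + h) = poly (fderiv p) y + 2 * h * s + h^2 * t" by blast
  obtain s1 where s1: "poly p (y + h) = poly p y + h * poly (fderiv p) y + h^2 * s1"
    using taylor1 by blast
  show ?case
    by (rule exI[of _ "poly (fderiv p) y + y * s + h * s"], rule exI[of _ "y * t + h * t + s1"])
       (simp only: poly_pCons fderiv_pCons poly_add st s1, simp add: algebra_simps power2_eq_square)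
qed

lemma poly_iter_Suc: "poly_iter f (Suc l) = pcompose f (poly_iter f l)"
  by (simp add: poly_iter_def)

lemma poly_poly_iter: "poly (poly_iter f l) x = (poly f ^^ l) x"
  by (induction l) (simp_all add: poly_iter_def poly_pcompose)

lemma poly_fderiv_iter:
  fixes f :: "'a::comm_ring_1 poly"
  shows "poly (fderiv (poly_iter f l)) x = (\<Prod>i<l. poly (fderiv f) ((poly f ^^ i) x))"
proof (induction l)
  case 0 then show ?case by (simp add: poly_iter_def fderiv_X)
next
  case (Suc l)
  then show ?case
    by (simp add: poly_iter_Suc fderiv_pcompose poly_pcompose poly_poly_iter mult.commute)
qed

lemma prod_lessThan_add: fixes b :: nat shows "(\<Prod>i<a+b. g i) = (\<Prod>i<a. g i) * (\<Prod>i<b. g (a+i))"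
  by (induction b) (simp_all add: mult.assoc)

lemma prod_diff_dvd:
  fixes u v :: "nat \<Rightarrow> 'a::comm_ring_1"
  assumes "\<And>i. i < k \<Longrightarrow> d dvd u i - v i"
  shows "d dvd (\<Prod>i<k. u i) - (\<Prod>i<k. v i)"
  using assms
proof (induction k)
  case 0 then show ?case by simp
next
  case (Suc k)
  have e: "(\<Prod>i<Suc k. u i) - (\<Prod>i<Suc k. v i)
     = ((\<Prod>i<k. u i) - (\<Prod>i<k. v i)) * u k + (\<Prod>i<k. v i) * (u k - v k)"
    by (simp add: algebra_simps)
  show ?case unfolding e using Suc by (intro dvd_add dvd_mult2 dvd_mult) auto
qed

lemma red_prod_odd:
  fixes k :: nat
  assumes "\<And>i. i < k \<Longrightarrow> red 1 (u i) = 1"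
  shows "red 1 (\<Prod>i<k. u i) = 1"
  using assms by (induction k) (simp_all add: red_one red_mult)

lemma red_cong_iff: "red m x = red m y \<longleftrightarrow> (2::padic2)^m dvd (x - y)"
  by (simp add: red_eq_iff pow2_dvd_iff)

lemma pow2_dvd_le: "j \<le> m \<Longrightarrow> (2::padic2)^m dvd x \<Longrightarrow> (2::padic2)^j dvd x"
  by (meson dvd_trans le_imp_power_dvd)

lemma poly_diff_dvd:
  fixes p :: "'a::comm_ring_1 poly"
  shows "(y' - y) dvd (poly p y' - poly p y)"
proof -
  obtain s where s: "poly p (y + (y' - y)) = poly p y + (y' - y) * poly (fderiv p) y + (y' - y)^2 * s"
    using taylor1 by blast
  then have "poly p y' - poly p y = (y' - y) * (poly (fderiv p) y + (y' - y) * s)"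
    by (simp add: algebra_simps power2_eq_square)
  then show ?thesis by simp
qed

lemma red_poly_cong: "red m y = red m y' \<Longrightarrow> red m (poly p y) = red m (poly p y')"
  by (meson dvd_trans poly_diff_dvd red_cong_iff)

lemma red01: "red 1 x = 0 \<or> red 1 x = 1"
  using red_range[of 1 x] by auto

lemma odd_iff: "red 1 x = 1 \<longleftrightarrow> \<not> 2 dvd x"
  using pow2_dvd_iff[of 1 x] red01[of x] by auto

lemma odd_minus1: "red 1 x = 1 \<Longrightarrow> 2 dvd (x - 1)"
  using red_cong_iff[of 1 x 1] by (simp add: red_one)

lemma pow2_dvd_cancel:
  assumes "(2::padic2)^(m+1) dvd 2^m * z" shows "red 1 z = 0"
proof -
  have "red (1+m) (2^m * z) = 0" using assms pow2_dvd_iff[of "m+1"] by (simp add: add.commute)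
  then show ?thesis using red_mult_pow2[of 1 m z] by simp
qed

lemma mod_suc_inj: "(j::nat) < L \<Longrightarrow> j' < L \<Longrightarrow> (j+1) mod L = (j'+1) mod L \<Longrightarrow> j = j'"
  by (cases "Suc j = L"; cases "Suc j' = L") (auto simp: Suc_lessI)

section \<open>Cycles\<close>

lemma cyc_step:
  assumes "is_cycle f m l xs" "j < l" "red m y = xs ! j"
  shows "red m (poly f y) = xs ! ((j+1) mod l)"
proof -
  have xin: "xs ! j \<in> {0..<2^m}" using assms unfolding is_cycle_def by (auto dest: nth_mem)
  have "red m (of_int (xs ! j)) = red m y" using xin assms(3) by (simp add: red_of_int)
  then have "red m (poly f y) = fmod f m (xs ! j)" unfolding fmod_def by (metis red_poly_cong)
  then show ?thesis using assms unfolding is_cycle_def by simp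
qed

lemma cyc_iter:
  assumes "is_cycle f m l xs" "j < l" "red m y = xs ! j"
  shows "red m ((poly f ^^ i) y) = xs ! ((j+i) mod l)"
proof (induction i)
  case 0 then show ?case using assms by simp
next
  case (Suc i)
  have l: "l > 0" using assms by auto
  have "red m ((poly f ^^ Suc i) y) = xs ! (((j+i) mod l + 1) mod l)"
    using cyc_step[OF assms(1) _ Suc] l by simp
  also have "((j+i) mod l + 1) mod l = (j + Suc i) mod l" by (simp add: mod_Suc_eq)
  finally show ?case .
qed

lemma cyc_index:
  assumes "is_cycle f m l xs" "red m y \<in> set xs"
  obtains j where "j < l" "red m y = xs ! j"
  using assms unfolding is_cycle_def by (metis in_set_conv_nth)

lemma cyc_mem:
  assumes "is_cycle f m l xs" "red m y \<in> set xs"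
  shows "red m ((poly f ^^ i) y) \<in> set xs"
proof -
  obtain j where j: "j < l" "red m y = xs ! j" using cyc_index assms by blast
  have "(j+i) mod l < l" using j by simp
  then show ?thesis using cyc_iter[OF assms(1) j] assms(1) unfolding is_cycle_def by simp
qed

lemma cyc_period:
  assumes "is_cycle f m l xs" "red m y \<in> set xs"
  shows "red m ((poly f ^^ l) y) = red m y"
proof -
  obtain j where j: "j < l" "red m y = xs ! j" using cyc_index assms by blast
  then show ?thesis using cyc_iter[OF assms(1) j, of l] by simp
qed

lemma alg0: fixes F F' D e s :: "'a::comm_ring_1"
  assumes "F' = F + 2^n*D + (2^n)^2*s" "D = 2*e"
  shows "F' - F = 2^(n+1)*e + (2^n)^2*s"
  using assms by (simp add: mult_ac)

lemma algC2: fixes D D' h s t c :: "'a::comm_ring_1"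
  assumes "D' = D + 2*h*s + h^2*t" "h = 2^n*c"
  shows "D' - D = 2^(n+1)*(c*s) + (2^n)^2*(c^2*t)"
  using assms by (simp add: power_mult_distrib mult_ac)

lemma alg1: fixes G G' x x' A s e c :: "'a::comm_ring_1"
  assumes "G' = G + (x' - x)*A + (x'-x)^2*s" "A = 1 + 2*e" "x' - x = 2^m*c"
  shows "(G' - x') - (G - x) = 2^(m+1)*(c*e) + (2^m)^2*(c^2*s)"
proof -
  have "(G' - x') - (G - x) = (x' - x)*(A - 1) + (x'-x)^2*s" using assms(1) by (simp add: algebra_simps)
  also have "\<dots> = 2^m*c*(2*e) + (2^m*c)^2*s" using assms(2,3) by simp
  also have "\<dots> = 2^(m+1)*(c*e) + (2^m)^2*(c^2*s)" by (simp add: power_mult_distrib mult_ac)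
  finally show ?thesis .
qed

lemma alg2: fixes Fg F E D s e b :: "'a::comm_ring_1"
  assumes "Fg = F + E*D + E^2*s" "D = 1 + 2*e" "E = 2^m*b"
  shows "(Fg - F) - E = 2^(m+1)*(b*e) + (2^m)^2*(b^2*s)"
proof -
  have "(Fg - F) - E = E*(D - 1) + E^2*s" using assms(1) by (simp add: algebra_simps)
  also have "\<dots> = 2^m*b*(2*e) + (2^m*b)^2*s" using assms(2,3) by simp
  also have "\<dots> = 2^(m+1)*(b*e) + (2^m)^2*(b^2*s)" by (simp add: power_mult_distrib mult_ac)
  finally show ?thesis .
qed

lemma alg4: fixes a P Q d e :: "'a::comm_ring_1"
  assumes "a = P*Q" "Q = P + 4*d" "P = 1 + 2*e"
  shows "a - 1 = 4*(P*d + e*e + e)"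
  using assms by (simp add: algebra_simps)

lemma dvd_combo:
  assumes "j \<le> 2*n" shows "(2::padic2)^j dvd 2^j*u + (2^n)^2*v"
proof -
  have "(2::padic2)^j dvd (2^n)^2"
    using assms by (simp add: power_mult[symmetric] mult.commute le_imp_power_dvd)
  then show ?thesis by (simp add: dvd_add dvd_mult2)
qed

theorem lemma3p8:
  fixes f :: "padic2 poly" and n k :: nat and \<sigma> \<tau> :: "int list"
  assumes "n \<ge> 1"
    and "is_cycle f n k \<sigma>"
    and "grows f n \<sigma>"
    and "is_lift f n \<sigma> \<tau>"
  shows "strongly_grows f (n + 1) \<tau> \<or> strongly_splits f (n + 1) \<tau>"
proof -
  define m where "m = n + 1"
  define L where "L = 2 * k"
  define D where "D = (\<lambda>y. poly (fderiv f) y)"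
  have n1: "n \<ge> 1" by fact
  have csig: "is_cycle f n k \<sigma>" by fact
  have lenS: "length \<sigma> = k" using csig by (simp add: is_cycle_def)
  have ctau: "is_cycle f m L \<tau>" and setT: "set \<tau> = lift_set n \<sigma>"
    using assms(4) lenS by (auto simp: is_lift_def m_def L_def)
  have lenT: "length \<tau> = L" using ctau by (simp add: is_cycle_def)
  have Lpos: "L > 0" using ctau by (simp add: is_cycle_def)
  have m2: "m \<ge> 2" "m \<le> 2*n" using n1 by (auto simp: m_def)
  have inS: "red n y \<in> set \<sigma>" if "red m y \<in> set \<tau>" for y
    using that red_compat[of n m y] by (simp add: setT lift_set_def m_def)
  have toS: "red m y \<in> set \<tau>" if "red n y \<in> set \<sigma>" for y
    using that red_compat[of n m y] red_range[of m y] by (simp add: setT lift_set_def m_def)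
  have Dodd: "red 1 (D y) = 1" if yT: "red m y \<in> set \<tau>" for y
  proof (rule ccontr)
    assume "red 1 (D y) \<noteq> 1"
    then have "2 dvd D y" using odd_iff by blast
    then obtain e where e: "D y = 2 * e" unfolding dvd_def by blast
    define y' where "y' = y + 2^n"
    have "red n y' = red n y" unfolding red_cong_iff y'_def by simp
    then have y'T: "red m y' \<in> set \<tau>" using inS[OF yT] toS by simp
    have ne: "red m y' \<noteq> red m y"
    proof
      assume "red m y' = red m y"
      then have "red m (y' - y) = 0" using red_eq_iff by blast
      then have "(2::int)^n mod 2^(n+1) = 0" by (simp add: y'_def red_pow2 m_def)
      then show False by simp
    qed
    obtain s where s: "poly f (y + 2^n) = poly f y + 2^n * D y + (2^n)^2 * s"
      using taylor1 unfolding D_def by blast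
    have "poly f y' - poly f y = 2^(n+1) * e + (2^n)^2 * s"
      using alg0[OF s e] by (simp add: y'_def)
    then have "(2::padic2)^m dvd poly f y' - poly f y"
      using dvd_combo[OF m2(2)] by (simp add: m_def)
    then have feq: "red m (poly f y') = red m (poly f y)" using red_cong_iff by blast
    obtain j where j: "j < L" "red m y = \<tau> ! j" using cyc_index[OF ctau yT] by blast
    obtain j' where j': "j' < L" "red m y' = \<tau> ! j'" using cyc_index[OF ctau y'T] by blast
    have "\<tau> ! ((j'+1) mod L) = \<tau> ! ((j+1) mod L)"
      using feq cyc_step[OF ctau j] cyc_step[OF ctau j'] by simp
    moreover have "distinct \<tau>" using ctau by (simp add: is_cycle_def)
    ultimately have "(j'+1) mod L = (j+1) mod L"
      using Lpos lenT by (simp add: nth_eq_iff_index_eq)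
    then have "j' = j" using mod_suc_inj j j' by blast
    then show False using ne j j' by simp
  qed
  have C2: "(2::padic2)^m dvd D y' - D y" if hyy: "(2::padic2)^n dvd y' - y" for y y'
  proof -
    obtain c where c: "y' - y = 2^n * c" using hyy unfolding dvd_def by blast
    obtain s t where st: "D (y + (y' - y)) = D y + 2 * (y' - y) * s + (y' - y)^2 * t"
      using taylor2 unfolding D_def by blast
    have "D y' - D y = 2^(n+1) * (c * s) + (2^n)^2 * (c^2 * t)"
      using algC2[OF st c] by simp
    then show ?thesis using dvd_combo[OF m2(2)] by (simp add: m_def)
  qed
  have A: "red 2 (a_coef f L x) = 1" if xT: "red m x \<in> set \<tau>" for x
  proof -
    define y where "y = (\<lambda>i. (poly f ^^ i) x)"
    have yT: "red m (y i) \<in> set \<tau>" for i using cyc_mem[OF ctau xT] by (simp add: y_def)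
    have a_eq: "a_coef f L x = (\<Prod>i<k. D (y i)) * (\<Prod>i<k. D (y (k+i)))"
      unfolding a_coef_def poly_fderiv_iter L_def mult_2 prod_lessThan_add D_def y_def by simp
    define P where "P = (\<Prod>i<k. D (y i))"
    define Q where "Q = (\<Prod>i<k. D (y (k+i)))"
    have yk: "red n (y (k+i)) = red n (y i)" for i
    proof -
      have sig: "red n (y i) \<in> set \<sigma>" using inS[OF yT] .
      obtain j where j: "j < k" "red n (y i) = \<sigma> ! j" using cyc_index[OF csig sig] by blast
      have "y (k+i) = (poly f ^^ k) (y i)" by (simp add: y_def funpow_add)
      then show ?thesis using cyc_iter[OF csig j, of k] j by simp
    qed
    have "(2::padic2)^m dvd Q - P" unfolding P_def Q_def
      by (rule prod_diff_dvd, rule C2) (use yk red_cong_iff in blast)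
    then have "(2::padic2)^2 dvd Q - P" using pow2_dvd_le m2 by blast
    then obtain d where "Q - P = 4 * d" unfolding dvd_def by auto
    then have d: "Q = P + 4 * d" by (simp add: algebra_simps)
    have "red 1 P = 1" unfolding P_def using Dodd yT by (intro red_prod_odd) auto
    then obtain e where "P - 1 = 2 * e" using odd_minus1 unfolding dvd_def by blast
    then have e: "P = 1 + 2 * e" by (simp add: algebra_simps)
    have "a_coef f L x - 1 = 4 * (P * d + e * e + e)"
      using alg4[OF _ d e] a_eq by (simp add: P_def[symmetric] Q_def[symmetric])
    then have "(2::padic2)^2 dvd a_coef f L x - 1" by simp
    then show ?thesis using red_cong_iff[of 2 "a_coef f L x" 1] by (simp add: red_one)
  qed
  have Aodd: "\<exists>e. a_coef f L x = 1 + 2 * e" if "red m x \<in> set \<tau>" for x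
  proof -
    have "red 1 (a_coef f L x) = 1" using A[OF that] red_compat[of 1 2 "a_coef f L x"] by simp
    then show ?thesis using odd_minus1 by (metis dvdE add_diff_cancel_left' diff_add_cancel add.commute)
  qed
  define g where "g = poly f ^^ L"
  define B where "B = (\<lambda>x. b_coef f m L x)"
  have hB: "2^m * B x = g x - x" if "red m x \<in> set \<tau>" for x
  proof -
    have "(2::padic2)^m dvd g x - x"
      using cyc_period[OF ctau that] red_cong_iff by (simp add: g_def)
    then obtain q where q: "g x - x = 2^m * q" unfolding dvd_def by blast
    have q': "poly (poly_iter f L) x - x = 2^m * q" using q by (simp add: poly_poly_iter g_def)
    have "\<exists>!b. 2^m * b = poly (poly_iter f L) x - x"
    proof (rule ex1I[of _ q])
      show "2^m * q = poly (poly_iter f L) x - x" using q' by simp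
    next
      fix b assume "2^m * b = poly (poly_iter f L) x - x"
      then show "b = q" using q' pow2_cancel by metis
    qed
    then have "2^m * (THE b. 2^m * b = poly (poly_iter f L) x - x) = poly (poly_iter f L) x - x"
      by (rule theI')
    then show ?thesis unfolding B_def b_coef_def by (simp add: poly_poly_iter g_def)
  qed
  have step1: "red 1 (B x') = red 1 (B x)"
    if xT: "red m x \<in> set \<tau>" and x'T: "red m x' \<in> set \<tau>" and eq: "red m x = red m x'" for x x'
  proof -
    obtain c where c: "x' - x = 2^m * c" using eq red_cong_iff[of m x' x] unfolding dvd_def by auto
    obtain s where s: "poly (poly_iter f L) (x + (x' - x)) = poly (poly_iter f L) x
        + (x' - x) * poly (fderiv (poly_iter f L)) x + (x' - x)^2 * s"
      using taylor1 by blast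
    obtain e where e: "a_coef f L x = 1 + 2 * e" using Aodd[OF xT] by blast
    have "2^m * (B x' - B x) = (g x' - x') - (g x - x)"
      by (simp only: right_diff_distrib hB[OF xT] hB[OF x'T])
    also have "\<dots> = 2^(m+1) * (c * e) + (2^m)^2 * (c^2 * s)"
    proof -
      have xx: "x + (x' - x) = x'" by simp
      have s'': "g x' = g x + (x' - x) * a_coef f L x + (x' - x)^2 * s"
        using s unfolding xx poly_poly_iter a_coef_def[symmetric] g_def[symmetric] .
      show ?thesis by (rule alg1[OF s'' e c])
    qed
    finally have "(2::padic2)^(m+1) dvd 2^m * (B x' - B x)"
      using dvd_combo[of "m+1" m] m2 by simp
    then have "red 1 (B x' - B x) = 0" by (rule pow2_dvd_cancel)
    then show ?thesis using red_eq_iff by blast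
  qed
  have step2: "red 1 (B (poly f x)) = red 1 (B x)" if xT: "red m x \<in> set \<tau>" for x
  proof -
    have fxT: "red m (poly f x) \<in> set \<tau>" using cyc_mem[OF ctau xT, of 1] by simp
    obtain s where s: "poly f (x + (g x - x)) = poly f x + (g x - x) * D x + (g x - x)^2 * s"
      using taylor1 unfolding D_def by blast
    obtain e where e: "D x = 1 + 2 * e" using Dodd[OF xT] odd_minus1
      by (metis dvdE add_diff_cancel_left' diff_add_cancel add.commute)
    have gf: "g (poly f x) = poly f (g x)" by (simp add: g_def funpow_swap1)
    have "2^m * (B (poly f x) - B x) = (g (poly f x) - poly f x) - (g x - x)"
      by (simp only: right_diff_distrib hB[OF xT] hB[OF fxT])
    also have "\<dots> = 2^(m+1) * (B x * e) + (2^m)^2 * (B x^2 * s)"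
    proof -
      have s': "poly f (g x) = poly f x + (g x - x) * D x + (g x - x)^2 * s" using s by simp
      show ?thesis using alg2[OF s' e hB[OF xT, symmetric]] gf by simp
    qed
    finally have "(2::padic2)^(m+1) dvd 2^m * (B (poly f x) - B x)"
      using dvd_combo[of "m+1" m] m2 by simp
    then have "red 1 (B (poly f x) - B x) = 0" by (rule pow2_dvd_cancel)
    then show ?thesis using red_eq_iff by blast
  qed
  have stepi: "red 1 (B ((poly f ^^ i) x)) = red 1 (B x)" if xT: "red m x \<in> set \<tau>" for x i
  proof (induction i)
    case 0 then show ?case by simp
  next
    case (Suc i)
    have "red m ((poly f ^^ i) x) \<in> set \<tau>" using cyc_mem[OF ctau xT] .
    then show ?case using step2 Suc by simp
  qed
  have const: "red 1 (B x') = red 1 (B x)"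
    if xT: "red m x \<in> set \<tau>" and x'T: "red m x' \<in> set \<tau>" for x x'
  proof -
    obtain j where j: "j < L" "red m x = \<tau> ! j" using cyc_index[OF ctau xT] by blast
    obtain j' where j': "j' < L" "red m x' = \<tau> ! j'" using cyc_index[OF ctau x'T] by blast
    define i where "i = j' + L - j"
    have "(j + i) mod L = j'" using j j' by (simp add: i_def)
    then have "red m ((poly f ^^ i) x) = red m x'" using cyc_iter[OF ctau j, of i] j' by simp
    then have "red 1 (B x') = red 1 (B ((poly f ^^ i) x))"
      using step1 cyc_mem[OF ctau xT] x'T by metis
    then show ?thesis using stepi[OF xT] by simp
  qed
  show ?thesis
  proof (cases "\<exists>x0. red m x0 \<in> set \<tau> \<and> red 1 (B x0) = 1")
    case True
    then obtain x0 where x0: "red m x0 \<in> set \<tau>" "red 1 (B x0) = 1" by blast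
    have "strongly_grows f m \<tau>" unfolding strongly_grows_def lenT
    proof (intro allI impI conjI)
      fix x assume xT: "red m x \<in> set \<tau>"
      show "red 2 (a_coef f L x) = 1" using A[OF xT] .
      have "red 1 (B x) = red 1 (B x0)" using const[OF x0(1) xT] .
      then show "red 1 (b_coef f m L x) = 1" using x0(2) unfolding B_def by simp
    qed
    then show ?thesis by (simp add: m_def)
  next
    case False
    have "strongly_splits f m \<tau>" unfolding strongly_splits_def lenT
    proof (intro allI impI conjI)
      fix x assume xT: "red m x \<in> set \<tau>"
      show "red 2 (a_coef f L x) = 1" using A[OF xT] .
      have "red 1 (B x) \<noteq> 1" using False xT by blast
      then show "red 1 (b_coef f m L x) = 0" using red01[of "B x"] unfolding B_def by simp
    qed
    then show ?thesis by (simp add: m_def)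
  qed
qed

end
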